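(* Consider the secure distributed linearly separable computation problem with $\mathsf K_{\rm c}=1$ and $\mathsf M=\frac{\mathsf K}{\mathsf N}(\mathsf N-\mathsf N_{\rm r}+1)$, and any secure scheme with assignment $\mathbf Z=(\mathcal Z_1,\dots,\mathcal Z_{\mathsf N})$ and randomness size $\eta$. If there exists an ordered set of servers $\mathbf s=(s_1,\dots,s_{|\mathbf s|})$ in $[\mathsf N]$ such that $\mathcal Z_{s_i}\setminus(\mathcal Z_{s_1}\cup\cdots\cup\mathcal Z_{s_{i-1}})\neq\emptyset$ for all $i\in[|\mathbf s|]$, then $\eta\ge|\mathbf s|-1$.
   Context: Problem setting. $\mathsf K,\mathsf N,\mathsf N_{\rm r},\mathsf M$ are positive integers with $\mathsf N_{\rm r}\le \mathsf N$ and $\mathsf N$ dividing $\mathsf K$. Fix a prime power $\mathsf q$ and a positive integer $\mathsf L$. Datasets $D_1,\dots,D_{\mathsf K}$ are independent; the message $W_k=f_k(D_k)\in\mathbb F_{\mathsf q}^{\mathsf L}$, and $W_1,\dots,W_{\mathsf K}$ are mutually independent, each uniform over $\mathbb F_{\mathsf q}^{\mathsf L}$. The user wants $W_1+\cdots+W_{\mathsf K}$. A secure scheme consists of: an assignment $\mathcal Z_n\subseteq[\mathsf K]$, $|\mathcal Z_n|\le\mathsf M$, $n\in[\mathsf N]$; a random variable $Q$ on a finite set, independent of $(D_1,\dots,D_{\mathsf K})$, given to every server but not to the user; transmissions $X_n=\psi_n(\{W_k:k\in\mathcal Z_n\},Q)\in\mathbb F_{\mathsf q}^{\mathsf T_n}$;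 decodability: for every $\mathcal A\subseteq[\mathsf N]$ with $|\mathcal A|=\mathsf N_{\rm r}$, $W_1+\cdots+W_{\mathsf K}$ is a function of $\{X_n:n\in\mathcal A\}$; security: $I(W_1,\dots,W_{\mathsf K};X_1,\dots,X_{\mathsf N}\mid W_1+\cdots+W_{\mathsf K})=0$. The randomness size is $\eta=H(Q)/\mathsf L$, with entropy measured in $\mathsf q$-ary units. (It is known that when $\mathsf M=\frac{\mathsf K}{\mathsf N}(\mathsf N-\mathsf N_{\rm r}+1)$, in any such decodable scheme each dataset is assigned to exactly $\mathsf N-\mathsf N_{\rm r}+1$ servers and each server receives exactly $\mathsf M$ datasets.) *)

theory Defs
  imports "HOL-Probability.Probability"
begin

text \<open>Messages W_1..W_K, each in F_q^L, are encoded as an extensional function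
  w :: nat => nat => 'f with w k l the l-th coordinate (l < L) of W_k (1 <= k <= K).\<close>
definition msg_space :: "nat \<Rightarrow> nat \<Rightarrow> (nat \<Rightarrow> nat \<Rightarrow> 'f) set" where
  "msg_space K L = PiE {1..K} (\<lambda>_. PiE {..<L} (\<lambda>_. UNIV))"

definition msg_sum :: "nat \<Rightarrow> nat \<Rightarrow> (nat \<Rightarrow> nat \<Rightarrow> 'f::comm_ring_1) \<Rightarrow> (nat \<Rightarrow> 'f)" where
  "msg_sum K L w = (\<lambda>l\<in>{..<L}. \<Sum>k\<in>{1..K}. w k l)"

definition joint_pmf :: "nat \<Rightarrow> nat \<Rightarrow> 'r pmf \<Rightarrow> ((nat \<Rightarrow> nat \<Rightarrow> 'f::finite) \<times> 'r) pmf" where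
  "joint_pmf K L Q = pair_pmf (pmf_of_set (msg_space K L)) Q"

definition sample_space :: "nat \<Rightarrow> nat \<Rightarrow> 'r pmf \<Rightarrow> ((nat \<Rightarrow> nat \<Rightarrow> 'f::finite) \<times> 'r) measure" where
  "sample_space K L Q = restrict_space (measure_pmf (joint_pmf K L Q)) (set_pmf (joint_pmf K L Q))"

end

theory Submission
  imports Defs
begin

abbreviation Ent :: "'a measure \<Rightarrow> real \<Rightarrow> ('a \<Rightarrow> 'b) \<Rightarrow> real" where
  "Ent M b X \<equiv> prob_space.entropy M b (count_space (X ` space M)) X"

locale fin_info = information_space +
  assumes fin_space: "finite (space M)" and sets_Pow: "sets M = Pow (space M)"
begin

definition PX :: "('a \<Rightarrow> 'c) \<Rightarrow> 'c \<Rightarrow> real" where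
  "PX X x = prob (X -` {x} \<inter> space M)"

definition pt :: "'a \<Rightarrow> real" where "pt w = prob {w}"

lemma sf: "simple_function M X"
  unfolding simple_function_def using fin_space sets_Pow by auto

lemma prob_sum: "A \<subseteq> space M \<Longrightarrow> prob A = (\<Sum>w\<in>A. pt w)"
  unfolding pt_def
  by (rule measure_eq_sum_singleton) (auto intro: finite_subset[OF _ fin_space] simp: sets_Pow)

lemma PX_sum: "PX X x = (\<Sum>w\<in>{w\<in>space M. X w = x}. pt w)"
  unfolding PX_def by (subst prob_sum) (auto intro!: sum.cong)

lemma sum_img: "(\<Sum>t\<in>T ` space M. PX T t * G t) = (\<Sum>w\<in>space M. pt w * G (T w))"
proof -
  have "(\<Sum>w\<in>space M. pt w * G (T w)) = (\<Sum>t\<in>T ` space M. \<Sum>w\<in>{w\<in>space M. T w = t}. pt w * G (T w))"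
    by (rule sum.image_gen[OF fin_space])
  also have "\<dots> = (\<Sum>t\<in>T ` space M. PX T t * G t)"
    unfolding PX_sum sum_distrib_right by (intro sum.cong refl) auto
  finally show ?thesis by simp
qed

lemma sd: "simple_distributed M X (PX X)"
  unfolding PX_def by (rule simple_distributedI[OF sf]) (auto simp: measure_nonneg)

lemma ent_pt: "\<H>(X) = - (\<Sum>w\<in>space M. pt w * log b (PX X (X w)))"
  by (subst entropy_simple_distributed[OF sd]) (simp add: sum_img)

lemma pt_nonneg: "pt w \<ge> 0" unfolding pt_def by (rule measure_nonneg)

lemma pt_le_PX: "w \<in> space M \<Longrightarrow> pt w \<le> PX X (X w)"
  unfolding pt_def PX_def by (rule finite_measure_mono) (auto simp: sets_Pow)

lemma PX_le1: "PX X x \<le> 1" unfolding PX_def by (rule prob_le_1)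

lemma ent_cong: "(\<And>w. w \<in> space M \<Longrightarrow> X w = Y w) \<Longrightarrow> \<H>(X) = \<H>(Y)"
proof -
  assume h: "\<And>w. w \<in> space M \<Longrightarrow> X w = Y w"
  have "\<And>w. w \<in> space M \<Longrightarrow> PX X (X w) = PX Y (Y w)"
    unfolding PX_def using h by (intro arg_cong[where f=prob]) auto
  then show ?thesis unfolding ent_pt by (intro arg_cong[where f=uminus] sum.cong) auto
qed

lemma ent_mono: "(\<And>w. w \<in> space M \<Longrightarrow> X w = f (Y w)) \<Longrightarrow> \<H>(X) \<le> \<H>(Y)"
proof -
  assume h: "\<And>w. w \<in> space M \<Longrightarrow> X w = f (Y w)"
  have "\<H>(X) = \<H>(f \<circ> Y)" by (rule ent_cong) (simp add: h)
  also have "\<dots> \<le> \<H>(Y)" by (rule entropy_data_processing[OF sf])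
  finally show ?thesis .
qed

lemma ent_eq: "(\<And>w. w \<in> space M \<Longrightarrow> X w = f (Y w)) \<Longrightarrow> (\<And>w. w \<in> space M \<Longrightarrow> Y w = g (X w)) \<Longrightarrow> \<H>(X) = \<H>(Y)"
  by (meson antisym ent_mono)

lemma ent_nonneg: "\<H>(X) \<ge> 0"
proof -
  have "pt w * log b (PX X (X w)) \<le> 0" if "w \<in> space M" for w
  proof (cases "pt w = 0")
    case False
    then have "pt w > 0" using pt_nonneg[of w] by simp
    moreover have "PX X (X w) > 0" using pt_le_PX[OF that, of X] \<open>pt w > 0\<close> by simp
    ultimately show ?thesis using PX_le1[of X "X w"] b_gt_1
      by (simp add: mult_nonneg_nonpos)
  qed simp
  then show ?thesis unfolding ent_pt by (simp add: sum_nonpos)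
qed

lemma subadd: "\<H>(\<lambda>w. (X w, Y w)) \<le> \<H>(X) + \<H>(Y)"
  using entropy_chain_rule[OF sf sf, of X Y] conditional_entropy_less_eq_entropy[OF sf sf, of Y X]
  by simp

lemma ent_le_card: "\<H>(X) \<le> log b (real (card (X ` space M)))"
  by (rule entropy_le_card[OF sd])

lemma cmi_ent: "\<I>(X ; Y | Z) = \<H>(\<lambda>w. (X w, Z w)) + \<H>(\<lambda>w. (Y w, Z w)) - \<H>(\<lambda>w. (X w, Y w, Z w)) - \<H>(Z)"
proof -
  let ?T = "\<lambda>w. (X w, Y w, Z w)"
  let ?G = "\<lambda>(x, y, z). log b (PX ?T (x, y, z) / (PX (\<lambda>w. (X w, Z w)) (x, z) * (PX (\<lambda>w. (Y w, Z w)) (y, z) / PX Z z)))"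
  have "\<I>(X ; Y | Z) = (\<Sum>t\<in>?T ` space M. PX ?T t * ?G t)"
    by (subst conditional_mutual_information_eq[OF sd sd sd sd]) (simp add: split_beta')
  also have "\<dots> = (\<Sum>w\<in>space M. pt w * ?G (?T w))" by (rule sum_img)
  also have "\<dots> = (\<Sum>w\<in>space M. pt w * log b (PX ?T (?T w)) - pt w * log b (PX (\<lambda>w. (X w, Z w)) (X w, Z w))
        - pt w * log b (PX (\<lambda>w. (Y w, Z w)) (Y w, Z w)) + pt w * log b (PX Z (Z w)))"
  proof (intro sum.cong refl)
    fix w assume w: "w \<in> space M"
    show "pt w * ?G (?T w) = pt w * log b (PX ?T (?T w)) - pt w * log b (PX (\<lambda>w. (X w, Z w)) (X w, Z w))
        - pt w * log b (PX (\<lambda>w. (Y w, Z w)) (Y w, Z w)) + pt w * log b (PX Z (Z w))"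
    proof (cases "pt w = 0")
      case False
      then have p: "pt w > 0" using pt_nonneg[of w] by simp
      have a: "PX ?T (?T w) > 0" using pt_le_PX[OF w, of ?T] p by simp
      have bb: "PX (\<lambda>w. (X w, Z w)) (X w, Z w) > 0" using pt_le_PX[OF w, of "\<lambda>w. (X w, Z w)"] p by simp
      have c: "PX (\<lambda>w. (Y w, Z w)) (Y w, Z w) > 0" using pt_le_PX[OF w, of "\<lambda>w. (Y w, Z w)"] p by simp
      have d: "PX Z (Z w) > 0" using pt_le_PX[OF w, of Z] p by simp
      show ?thesis using a bb c d b_gt_1
        by (simp add: log_divide log_mult algebra_simps)
    qed simp
  qed
  also have "\<dots> = \<H>(\<lambda>w. (X w, Z w)) + \<H>(\<lambda>w. (Y w, Z w)) - \<H>(\<lambda>w. (X w, Y w, Z w)) - \<H>(Z)"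
    unfolding ent_pt by (simp add: sum.distrib sum_subtractf)
  finally show ?thesis .
qed

lemma submod: "\<H>(\<lambda>w. (X w, Y w, Z w)) + \<H>(Z) \<le> \<H>(\<lambda>w. (X w, Z w)) + \<H>(\<lambda>w. (Y w, Z w))"
  using conditional_mutual_information_nonneg[OF sf sf sf, of X Y Z] cmi_ent[of X Y Z] by simp

lemma ent_le_set: "X ` space M \<subseteq> A \<Longrightarrow> finite A \<Longrightarrow> \<H>(X) \<le> log b (real (card A))"
proof -
  assume a: "X ` space M \<subseteq> A" "finite A"
  have "space M \<noteq> {}" by (rule not_empty)
  then have "card (X ` space M) > 0" using fin_space by (simp add: card_gt_0_iff)
  moreover have "card (X ` space M) \<le> card A" using a by (rule card_mono[rotated])
  ultimately have "log b (real (card (X ` space M))) \<le> log b (real (card A))"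
    using b_gt_1 by simp
  then show ?thesis using ent_le_card[of X] by linarith
qed

lemma step_gen:
  assumes "\<And>w. w \<in> space M \<Longrightarrow> P w = hP (V w)"
    and "\<And>w. w \<in> space M \<Longrightarrow> G w = hG (Xi w, V w)"
  shows "\<H>(\<lambda>w. (Xi w, P w)) \<ge> \<H>(P) + \<H>(G) - \<H>(V)"
proof -
  have 1: "\<H>(\<lambda>w. (Xi w, V w, P w)) + \<H>(P) \<le> \<H>(\<lambda>w. (Xi w, P w)) + \<H>(\<lambda>w. (V w, P w))"
    by (rule submod)
  have 2: "\<H>(G) \<le> \<H>(\<lambda>w. (Xi w, V w, P w))"
    by (rule ent_mono[where f="\<lambda>(a, v, p). hG (a, v)"]) (simp add: assms)
  have 3: "\<H>(\<lambda>w. (V w, P w)) = \<H>(V)"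
    by (rule ent_eq[where f="\<lambda>v. (v, hP v)" and g=fst]) (simp_all add: assms)
  show ?thesis using 1 2 3 by linarith
qed

lemma final_gen:
  assumes "\<And>w. w \<in> space M \<Longrightarrow> Y w = hY (X w)"
    and "\<And>w. w \<in> space M \<Longrightarrow> S w = hS (W w)"
    and "\<And>w. w \<in> space M \<Longrightarrow> (W w, Y w, S w) = hG (G w)"
    and sec: "\<I>(W ; X | S) = 0"
  shows "\<H>(G) \<ge> \<H>(W) + \<H>(Y) - \<H>(S)"
proof -
  have c: "\<H>(\<lambda>w. (W w, S w)) + \<H>(\<lambda>w. (X w, S w)) - \<H>(\<lambda>w. (W w, X w, S w)) - \<H>(S) = 0"
    using sec cmi_ent[of W X S] by simp
  have 1: "\<H>(\<lambda>w. (W w, X w, Y w, S w)) + \<H>(\<lambda>w. (Y w, S w)) \<le> \<H>(\<lambda>w. (W w, Y w, S w)) + \<H>(\<lambda>w. (X w, Y w, S w))"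
    by (rule submod)
  have 2: "\<H>(\<lambda>w. (W w, X w, Y w, S w)) = \<H>(\<lambda>w. (W w, X w, S w))"
    by (rule ent_eq[where g="\<lambda>(a, x, y, s). (a, x, s)" and f="\<lambda>(a, x, s). (a, x, hY x, s)"]) (simp_all add: assms)
  have 3: "\<H>(\<lambda>w. (X w, Y w, S w)) = \<H>(\<lambda>w. (X w, S w))"
    by (rule ent_eq[where g="\<lambda>(x, y, s). (x, s)" and f="\<lambda>(x, s). (x, hY x, s)"]) (simp_all add: assms)
  have 4: "\<H>(\<lambda>w. (W w, Y w, S w)) \<le> \<H>(G)"
    by (rule ent_mono[where f=hG]) (rule assms(3))
  have 5: "\<H>(Y) \<le> \<H>(\<lambda>w. (Y w, S w))"
    by (rule ent_mono[where f=fst]) simp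
  have 6: "\<H>(\<lambda>w. (W w, S w)) = \<H>(W)"
    by (rule ent_eq[where g=fst and f="\<lambda>a. (a, hS a)"]) (simp_all add: assms)
  show ?thesis using c 1 2 3 4 5 6 by linarith
qed

end

lemma msg_fin: "finite (msg_space K L :: (nat \<Rightarrow> nat \<Rightarrow> 'f::finite) set)"
  unfolding msg_space_def by (intro finite_PiE) auto

lemma msg_ne: "(msg_space K L :: (nat \<Rightarrow> nat \<Rightarrow> 'f::finite) set) \<noteq> {}"
  unfolding msg_space_def by (simp add: PiE_eq_empty_iff)

lemma msg_card: "card (msg_space K L :: (nat \<Rightarrow> nat \<Rightarrow> 'f::finite) set) = CARD('f) ^ (L * K)"
  unfolding msg_space_def by (simp add: card_PiE power_mult)

lemma ss_space: "finite (set_pmf Q) \<Longrightarrow>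
  space (sample_space K L Q :: ((nat \<Rightarrow> nat \<Rightarrow> 'f::finite) \<times> 'r) measure) = msg_space K L \<times> set_pmf Q"
  unfolding sample_space_def joint_pmf_def
  by (simp add: space_restrict_space msg_fin msg_ne)

lemma snd_space: "finite (set_pmf Q) \<Longrightarrow>
  snd ` space (sample_space K L Q :: ((nat \<Rightarrow> nat \<Rightarrow> 'f::finite) \<times> 'r) measure) = set_pmf Q"
  by (simp add: ss_space msg_ne)

lemma msg_sum_PiE: "msg_sum K L w \<in> PiE {..<L} (\<lambda>_. UNIV)"
  unfolding msg_sum_def by (simp add: restrict_PiE_iff)

lemma ss_sets: "sets (sample_space K L Q :: ((nat \<Rightarrow> nat \<Rightarrow> 'f::finite) \<times> 'r) measure) = Pow (space (sample_space K L Q :: ((nat \<Rightarrow> nat \<Rightarrow> 'f::finite) \<times> 'r) measure))"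
  unfolding sample_space_def by (auto simp: sets_restrict_space space_restrict_space)

lemma ss_prob: "finite (set_pmf Q) \<Longrightarrow> prob_space (sample_space K L Q :: ((nat \<Rightarrow> nat \<Rightarrow> 'f::finite) \<times> 'r) measure)"
  unfolding sample_space_def
proof (rule prob_space_restrict_space)
  assume f: "finite (set_pmf Q)"
  have fin: "finite (set_pmf (joint_pmf K L Q :: ((nat \<Rightarrow> nat \<Rightarrow> 'f::finite) \<times> 'r) pmf))"
    unfolding joint_pmf_def using f by (simp add: msg_fin msg_ne)
  show "emeasure (measure_pmf (joint_pmf K L Q)) (set_pmf (joint_pmf K L Q :: ((nat \<Rightarrow> nat \<Rightarrow> 'f::finite) \<times> 'r) pmf)) = 1"
    using emeasure_measure_pmf_finite[OF fin] sum_pmf_eq_1[OF fin order_refl] by simp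
qed simp

lemma ss_single: "finite (set_pmf Q) \<Longrightarrow> x \<in> space (sample_space K L Q :: ((nat \<Rightarrow> nat \<Rightarrow> 'f::finite) \<times> 'r) measure) \<Longrightarrow>
   measure (sample_space K L Q :: ((nat \<Rightarrow> nat \<Rightarrow> 'f::finite) \<times> 'r) measure) {x} = pmf Q (snd x) / real (CARD('f) ^ (L * K))"
  unfolding sample_space_def
  apply (subst measure_restrict_space)
    apply (auto simp: space_restrict_space measure_pmf_single joint_pmf_def)
  apply (cases x) apply (auto simp: pmf_pair msg_fin msg_ne msg_card)
  done

lemma cover_lt:
  fixes Z :: "nat \<Rightarrow> nat set" and Q :: "'r pmf"
    and \<psi> :: "nat \<Rightarrow> (nat \<Rightarrow> nat \<Rightarrow> 'f::{finite,field}) \<Rightarrow> 'r \<Rightarrow> 'f list"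
  assumes L_pos: "L > 0"
    and psi_dep: "\<forall>n\<in>{1..N}. \<forall>w\<in>msg_space K L. \<forall>w'\<in>msg_space K L. \<forall>r.
                    (\<forall>k\<in>Z n. w k = w' k) \<longrightarrow> \<psi> n w r = \<psi> n w' r"
    and decodable: "\<forall>A. A \<subseteq> {1..N} \<and> card A = Nr \<longrightarrow>
                    (\<exists>g. \<forall>w\<in>msg_space K L. \<forall>r\<in>set_pmf Q.
                        g (\<lambda>n\<in>A. \<psi> n w r) = msg_sum K L w)"
    and k: "k \<in> {1..K}"
  shows "card {n\<in>{1..N}. k \<notin> Z n} < Nr"
proof (rule ccontr)
  assume "\<not> ?thesis"
  then obtain A where A: "A \<subseteq> {n\<in>{1..N}. k \<notin> Z n}" "card A = Nr"
    by (meson not_less obtain_subset_with_card_n)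
  then obtain g where g: "\<forall>w\<in>msg_space K L. \<forall>r\<in>set_pmf Q. g (\<lambda>n\<in>A. \<psi> n w r) = msg_sum K L w"
    using decodable by blast
  obtain r where r: "r \<in> set_pmf Q" using set_pmf_not_empty[of Q] by blast
  define w0 :: "nat \<Rightarrow> nat \<Rightarrow> 'f" where "w0 = (\<lambda>j\<in>{1..K}. \<lambda>l\<in>{..<L}. 0)"
  define w1 :: "nat \<Rightarrow> nat \<Rightarrow> 'f" where "w1 = w0(k := (\<lambda>l\<in>{..<L}. 1))"
  have w0m: "w0 \<in> msg_space K L" unfolding w0_def msg_space_def by auto
  have w1m: "w1 \<in> msg_space K L" using k unfolding w1_def w0_def msg_space_def by (auto simp: PiE_iff extensional_def)
  have "(\<lambda>n\<in>A. \<psi> n w0 r) = (\<lambda>n\<in>A. \<psi> n w1 r)"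
  proof (rule restrict_ext)
    fix n assume "n \<in> A"
    then have "n \<in> {1..N}" "k \<notin> Z n" using A by auto
    moreover have "\<forall>k'\<in>Z n. w0 k' = w1 k'" unfolding w1_def using \<open>k \<notin> Z n\<close> by auto
    ultimately show "\<psi> n w0 r = \<psi> n w1 r" using psi_dep[rule_format, of n w0 w1 r] w0m w1m by blast
  qed
  have e0: "g (\<lambda>n\<in>A. \<psi> n w0 r) = msg_sum K L w0" using g r w0m by blast
  have e1: "g (\<lambda>n\<in>A. \<psi> n w1 r) = msg_sum K L w1" using g r w1m by blast
  have "msg_sum K L w0 = msg_sum K L w1" using e0 e1 \<open>(\<lambda>n\<in>A. \<psi> n w0 r) = (\<lambda>n\<in>A. \<psi> n w1 r)\<close> by argo
  then have "msg_sum K L w0 0 = msg_sum K L w1 0" by simp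
  moreover have "msg_sum K L w0 0 = 0" using L_pos unfolding msg_sum_def w0_def by simp
  moreover have "msg_sum K L w1 0 = (\<Sum>j\<in>{1..K}. if j = k then 1 else 0)"
  proof -
    have "msg_sum K L w1 0 = (\<Sum>j\<in>{1..K}. w1 j 0)" using L_pos by (simp add: msg_sum_def)
    also have "\<dots> = (\<Sum>j\<in>{1..K}. if j = k then 1 else 0)"
    proof (rule sum.cong[OF refl])
      fix j assume "j \<in> {1..K}" then show "w1 j 0 = (if j = k then 1 else 0)"
        using L_pos by (simp add: w1_def w0_def)
    qed
    finally show ?thesis .
  qed
  moreover have "\<dots> = 1" using k by simp
  ultimately show False by simp
qed

lemma count_exact:
  fixes Z :: "nat \<Rightarrow> nat set"
  assumes N_pos: "N > 0" and Nr_le: "Nr \<le> N" and Nr_pos: "Nr > 0"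
    and NM: "N * M = K * (N - Nr + 1)"
    and Z_sub: "\<forall>n\<in>{1..N}. Z n \<subseteq> {1..K}"
    and Z_card: "\<forall>n\<in>{1..N}. card (Z n) \<le> M"
    and lt: "\<forall>k\<in>{1..K}. card {n\<in>{1..N}. k \<notin> Z n} < Nr"
    and k: "k \<in> {1..K}"
  shows "card {n\<in>{1..N}. k \<notin> Z n} = Nr - 1"
proof -
  define c where "c k = card {n\<in>{1..N}. k \<in> Z n}" for k
  have split: "card {n\<in>{1..N}. k \<notin> Z n} + c k = N" for k
  proof -
    have "card {n\<in>{1..N}. k \<notin> Z n} + card {n\<in>{1..N}. k \<in> Z n} = card ({n\<in>{1..N}. k \<notin> Z n} \<union> {n\<in>{1..N}. k \<in> Z n})"
      by (rule card_Un_disjoint[symmetric]) auto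
    also have "{n\<in>{1..N}. k \<notin> Z n} \<union> {n\<in>{1..N}. k \<in> Z n} = {1..N}" by auto
    finally show ?thesis by (simp add: c_def)
  qed
  have cge: "c j \<ge> N - Nr + 1" if "j \<in> {1..K}" for j
  proof -
    have "card {n\<in>{1..N}. j \<notin> Z n} < Nr" using lt that by blast
    then show ?thesis using split[of j] Nr_le Nr_pos by linarith
  qed
  have "(\<Sum>n\<in>{1..N}. card (Z n)) = (\<Sum>n\<in>{1..N}. \<Sum>j\<in>{1..K}. if j \<in> Z n then 1 else 0)"
  proof (intro sum.cong refl)
    fix n assume "n \<in> {1..N}"
    then have "Z n \<subseteq> {1..K}" using Z_sub by auto
    then have "Z n = {j\<in>{1..K}. j \<in> Z n}" by auto
    then have "card (Z n) = (\<Sum>j\<in>{j\<in>{1..K}. j \<in> Z n}. 1)" by simp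
    also have "\<dots> = (\<Sum>j\<in>{1..K}. if j \<in> Z n then 1 else 0)" by (rule sum.inter_filter) simp
    finally show "card (Z n) = (\<Sum>j\<in>{1..K}. if j \<in> Z n then 1 else 0)" .
  qed
  also have "\<dots> = (\<Sum>j\<in>{1..K}. \<Sum>n\<in>{1..N}. if j \<in> Z n then 1 else 0)" by (rule sum.swap)
  also have "\<dots> = (\<Sum>j\<in>{1..K}. c j)"
    unfolding c_def by (intro sum.cong refl) (simp add: sum.inter_filter[symmetric])
  finally have eq: "(\<Sum>n\<in>{1..N}. card (Z n)) = (\<Sum>j\<in>{1..K}. c j)" .
  have "(\<Sum>n\<in>{1..N}. card (Z n)) \<le> N * M"
    using sum_mono[of "{1..N}" "\<lambda>n. card (Z n)" "\<lambda>_. M"] Z_card by simp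
  then have tot: "(\<Sum>j\<in>{1..K}. c j) \<le> K * (N - Nr + 1)" using eq NM by simp
  have "c k \<le> N - Nr + 1"
  proof (rule ccontr)
    assume "\<not> ?thesis"
    have s1: "(\<Sum>j\<in>{1..K}. c j) = c k + (\<Sum>j\<in>{1..K} - {k}. c j)" using k by (simp add: sum.remove)
    have s2: "(\<Sum>j\<in>{1..K} - {k}. c j) \<ge> (\<Sum>j\<in>{1..K} - {k}. N - Nr + 1)"
      by (rule sum_mono) (use cge in auto)
    have s3: "(\<Sum>j\<in>{1..K} - {k}. N - Nr + 1) = (K - 1) * (N - Nr + 1)" using k by simp
    have "(\<Sum>j\<in>{1..K}. c j) \<ge> c k + (K - 1) * (N - Nr + 1)" using s1 s2 s3 by linarith
    moreover have "c k + (K - 1) * (N - Nr + 1) > K * (N - Nr + 1)"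
    proof -
      obtain K' where K': "K = Suc K'" using k by (cases K) auto
      show ?thesis using \<open>\<not> c k \<le> N - Nr + 1\<close> unfolding K' by simp
    qed
    ultimately show False using tot by linarith
  qed
  then show ?thesis using cge[OF k] split[of k] Nr_le Nr_pos by linarith
qed

theorem theorem3:
  fixes K N Nr M L :: nat
    and Z :: "nat \<Rightarrow> nat set"
    and Q :: "'r pmf"
    and T :: "nat \<Rightarrow> nat"
    and \<psi> :: "nat \<Rightarrow> (nat \<Rightarrow> nat \<Rightarrow> 'f::{finite,field}) \<Rightarrow> 'r \<Rightarrow> 'f list"
    and s :: "nat list"
  assumes K_pos: "K > 0" and N_pos: "N > 0" and Nr_pos: "Nr > 0" and L_pos: "L > 0"
    and Nr_le: "Nr \<le> N" and N_dvd: "N dvd K"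
    and M_eq: "M = (K div N) * (N - Nr + 1)"
    and Z_sub: "\<forall>n\<in>{1..N}. Z n \<subseteq> {1..K}"
    and Z_card: "\<forall>n\<in>{1..N}. card (Z n) \<le> M"
    and Q_fin: "finite (set_pmf Q)"
    and psi_len: "\<forall>n\<in>{1..N}. \<forall>w\<in>msg_space K L. \<forall>r\<in>set_pmf Q. length (\<psi> n w r) = T n"
    and psi_dep: "\<forall>n\<in>{1..N}. \<forall>w\<in>msg_space K L. \<forall>w'\<in>msg_space K L. \<forall>r.
                    (\<forall>k\<in>Z n. w k = w' k) \<longrightarrow> \<psi> n w r = \<psi> n w' r"
    and decodable: "\<forall>A. A \<subseteq> {1..N} \<and> card A = Nr \<longrightarrow>
                    (\<exists>g. \<forall>w\<in>msg_space K L. \<forall>r\<in>set_pmf Q.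
                        g (\<lambda>n\<in>A. \<psi> n w r) = msg_sum K L w)"
    and secure: "prob_space.conditional_mutual_information
                   (sample_space K L Q :: ((nat \<Rightarrow> nat \<Rightarrow> 'f) \<times> 'r) measure) (real CARD('f))
                   (count_space (fst ` space (sample_space K L Q)))
                   (count_space ((\<lambda>(w, r). \<lambda>n\<in>{1..N}. \<psi> n w r) ` space (sample_space K L Q)))
                   (count_space ((\<lambda>(w, r). msg_sum K L w) ` space (sample_space K L Q)))
                   fst (\<lambda>(w, r). \<lambda>n\<in>{1..N}. \<psi> n w r) (\<lambda>(w, r). msg_sum K L w) = 0"
    and s_sub: "set s \<subseteq> {1..N}"
    and s_new: "\<forall>i<length s. Z (s ! i) - (\<Union>j<i. Z (s ! j)) \<noteq> {}"
  shows "prob_space.entropy (sample_space K L Q :: ((nat \<Rightarrow> nat \<Rightarrow> 'f) \<times> 'r) measure) (real CARD('f))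
           (count_space (snd ` space (sample_space K L Q))) snd / real L
         \<ge> real (length s) - 1"
proof -
  let ?M = "sample_space K L Q :: ((nat \<Rightarrow> nat \<Rightarrow> 'f) \<times> 'r) measure"
  let ?q = "real CARD('f)"
  have "card {0::'f, 1} \<le> CARD('f)" by (rule card_mono) auto
  then have card2: "CARD('f) \<ge> 2" by simp
  have q1: "real CARD('f) > 1" using card2 by simp
  have ps: "prob_space ?M" by (rule ss_prob[OF Q_fin])
  interpret fin_info ?M "real CARD('f)"
    by (rule fin_info.intro[OF information_space.intro[OF ps information_space_axioms.intro[OF q1]]
          fin_info_axioms.intro]) (simp_all add: ss_space[OF Q_fin] msg_fin Q_fin ss_sets)
  have sp: "space ?M = msg_space K L \<times> set_pmf Q" by (rule ss_space[OF Q_fin])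
  define c where "c = real (CARD('f) ^ (L * K))"
  have c_pos: "c > 0" unfolding c_def using card2 by simp
  have logc: "log (real CARD('f)) c = real (L * K)" unfolding c_def using q1 by simp
  have pt_eq: "pt x = pmf Q (snd x) / c" if "x \<in> space ?M" for x
    unfolding pt_def c_def by (rule ss_single[OF Q_fin that])
  have pt_pos: "pt x > 0" if "x \<in> space ?M" for x
  proof -
    have "snd x \<in> set_pmf Q" using that unfolding sp by (simp add: mem_Times_iff)
    then have "pmf Q (snd x) > 0" by (rule pmf_positive)
    then show ?thesis unfolding pt_eq[OF that] using c_pos by (rule divide_pos_pos)
  qed
  have "prob (space ?M) = (\<Sum>x\<in>space ?M. pt x)" by (rule prob_sum) (rule order_refl)
  then have sum_pt: "(\<Sum>x\<in>space ?M. pt x) = 1" using prob_space by argo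
  have PX_fst: "PX fst (fst x) = 1 / c" if "x \<in> space ?M" for x
  proof -
    have "{y \<in> space ?M. fst y = fst x} = (\<lambda>r. (fst x, r)) ` set_pmf Q" using that sp by auto
    then have "PX fst (fst x) = (\<Sum>r\<in>set_pmf Q. pt (fst x, r))"
      unfolding PX_sum by (simp add: sum.reindex inj_on_def)
    also have "\<dots> = (\<Sum>r\<in>set_pmf Q. pmf Q r / c)"
      using that sp by (intro sum.cong refl) (subst pt_eq, auto)
    also have "\<dots> = 1 / c" by (simp add: sum_divide_distrib[symmetric] sum_pmf_eq_1[OF Q_fin order_refl])
    finally show ?thesis .
  qed
  have PX_snd: "PX snd (snd x) = pmf Q (snd x)" if "x \<in> space ?M" for x
  proof -
    have xs: "snd x \<in> set_pmf Q" using that unfolding sp by (simp add: mem_Times_iff)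
    have "{y \<in> space ?M. snd y = snd x} = (\<lambda>w. (w, snd x)) ` msg_space K L"
    proof (intro equalityI subsetI)
      fix y assume "y \<in> {y \<in> space ?M. snd y = snd x}"
      then have "fst y \<in> msg_space K L" "snd y = snd x" unfolding sp by (auto simp: mem_Times_iff)
      then show "y \<in> (\<lambda>w. (w, snd x)) ` msg_space K L" by (metis prod.collapse image_eqI)
    next
      fix y assume "y \<in> (\<lambda>w. (w, snd x)) ` (msg_space K L :: (nat \<Rightarrow> nat \<Rightarrow> 'f) set)"
      then obtain w where "w \<in> msg_space K L" "y = (w, snd x)" by blast
      then show "y \<in> {y \<in> space ?M. snd y = snd x}" using xs unfolding sp by simp
    qed
    then have "PX snd (snd x) = (\<Sum>w\<in>msg_space K L. pt (w, snd x))"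
      unfolding PX_sum by (simp add: sum.reindex inj_on_def)
    also have "\<dots> = (\<Sum>w\<in>(msg_space K L :: (nat \<Rightarrow> nat \<Rightarrow> 'f) set). pmf Q (snd x) / c)"
    proof (rule sum.cong[OF refl])
      fix w assume "w \<in> (msg_space K L :: (nat \<Rightarrow> nat \<Rightarrow> 'f) set)"
      then have "(w, snd x) \<in> space ?M" using xs unfolding sp by simp
      then show "pt (w, snd x) = pmf Q (snd x) / c" by (simp add: pt_eq)
    qed
    also have "\<dots> = pmf Q (snd x)" using c_pos by (simp add: msg_card c_def)
    finally show ?thesis .
  qed
  have PX_id: "PX (\<lambda>x. (fst x, snd x)) (fst x, snd x) = pt x" if "x \<in> space ?M" for x
  proof -
    have "{y \<in> space ?M. (fst y, snd y) = (fst x, snd x)} = {x}" using that by auto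
    then show ?thesis unfolding PX_sum by simp
  qed
  have H_fst: "Ent ?M ?q (fst) = real (L * K)"
  proof -
    have "Ent ?M ?q (fst) = - (\<Sum>x\<in>space ?M. pt x * log (real CARD('f)) (1 / c))"
      unfolding ent_pt by (intro arg_cong[where f=uminus] sum.cong refl) (simp add: PX_fst)
    also have "\<dots> = - log (real CARD('f)) (1 / c)" by (simp add: sum_distrib_right[symmetric] sum_pt)
    also have "\<dots> = real (L * K)" using c_pos q1 logc by (simp add: log_divide)
    finally show ?thesis .
  qed
  have H_pair: "Ent ?M ?q (\<lambda>x. (fst x, snd x)) = Ent ?M ?q (fst) + Ent ?M ?q (snd)"
  proof -
    have "pt x * log (real CARD('f)) (PX (\<lambda>x. (fst x, snd x)) (fst x, snd x)) =
          pt x * log (real CARD('f)) (PX fst (fst x)) + pt x * log (real CARD('f)) (PX snd (snd x))"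
      if "x \<in> space ?M" for x
    proof -
      have "snd x \<in> set_pmf Q" using that unfolding sp by (simp add: mem_Times_iff)
      then have "pmf Q (snd x) > 0" by (rule pmf_positive)
      then show ?thesis using PX_id[OF that] PX_fst[OF that] PX_snd[OF that] pt_eq[OF that] c_pos q1
        by (simp add: log_divide right_diff_distrib diff_divide_distrib)
    qed
    then have "(\<Sum>x\<in>space ?M. pt x * log (real CARD('f)) (PX (\<lambda>x. (fst x, snd x)) (fst x, snd x))) =
          (\<Sum>x\<in>space ?M. pt x * log (real CARD('f)) (PX fst (fst x)) + pt x * log (real CARD('f)) (PX snd (snd x)))"
      by (rule sum.cong[OF refl])
    then show ?thesis unfolding ent_pt sum.distrib by simp
  qed
  define Y where "Y i = (\<lambda>x. map (\<lambda>n. \<psi> n (fst x) (snd x)) (take i s))" for i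
  have NM: "N * M = K * (N - Nr + 1)"
  proof -
    have "N * (K div N) = K" using N_dvd by simp
    moreover have "N * M = (N * (K div N)) * (N - Nr + 1)" unfolding M_eq by (simp only: mult.assoc)
    ultimately show ?thesis by simp
  qed
  have lt: "\<forall>k\<in>{1..K}. card {n\<in>{1..N}. k \<notin> Z n} < Nr"
    using cover_lt[OF L_pos psi_dep decodable] by blast
  have msg_x: "fst x \<in> msg_space K L" "snd x \<in> set_pmf Q" if "x \<in> space ?M" for x
    using that unfolding sp by (simp_all add: mem_Times_iff)
  have H_step: "Ent ?M ?q (Y (Suc i)) \<ge> Ent ?M ?q (Y i) + real L" if i_lt: "i < length s" for i
  proof -
    define ni where "ni = s ! i"
    have ni_N: "ni \<in> {1..N}" using s_sub i_lt nth_mem unfolding ni_def by blast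
    obtain k where k_in: "k \<in> Z ni" and k_new: "\<forall>j<i. k \<notin> Z (s ! j)"
      using s_new i_lt unfolding ni_def by blast
    have kK: "k \<in> {1..K}" using Z_sub ni_N k_in by blast
    define B where "B = {n\<in>{1..N}. k \<notin> Z n}"
    have cardB: "card B = Nr - 1" unfolding B_def
      by (rule count_exact[OF N_pos Nr_le Nr_pos NM Z_sub Z_card lt kK])
    have niB: "ni \<notin> B" using k_in unfolding B_def by auto
    have finB: "finite B" unfolding B_def by simp
    define A where "A = insert ni B"
    have A_sub: "A \<subseteq> {1..N}" unfolding A_def B_def using ni_N by auto
    have cardA: "card A = Nr" unfolding A_def using cardB niB Nr_pos finB by simp
    obtain g where g: "\<forall>w\<in>msg_space K L. \<forall>r\<in>set_pmf Q. g (\<lambda>n\<in>A. \<psi> n w r) = msg_sum K L w"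
      using decodable A_sub cardA by blast
    define Wm where "Wm = (\<lambda>x::(nat \<Rightarrow> nat \<Rightarrow> 'f) \<times> 'r. restrict (fst x) ({1..K} - {k}))"
    define fill where "fill = (\<lambda>v::nat \<Rightarrow> nat \<Rightarrow> 'f. v(k := (\<lambda>l\<in>{..<L}. 0)))"
    have fill_msg: "fill (Wm x) \<in> msg_space K L" if "x \<in> space ?M" for x
    proof -
      have "fst x \<in> msg_space K L" using msg_x[OF that] by simp
      then have fx: "fst x \<in> PiE {1..K} (\<lambda>_. PiE {..<L} (\<lambda>_. UNIV :: 'f set))" unfolding msg_space_def .
      have "fill (Wm x) \<in> PiE {1..K} (\<lambda>_. PiE {..<L} (\<lambda>_. UNIV :: 'f set))"
      proof (rule PiE_I)
        fix j assume j: "j \<in> {1..K}"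
        show "fill (Wm x) j \<in> PiE {..<L} (\<lambda>_. UNIV :: 'f set)"
        proof (cases "j = k")
          case True then show ?thesis unfolding fill_def by (simp add: restrict_PiE_iff)
        next
          case False
          then have "fill (Wm x) j = fst x j" using j unfolding fill_def Wm_def by simp
          moreover have "fst x j \<in> PiE {..<L} (\<lambda>_. UNIV :: 'f set)" using fx j by (rule PiE_mem)
          ultimately show ?thesis by simp
        qed
      next
        fix j assume "j \<notin> {1..K}"
        then show "fill (Wm x) j = undefined" using kK unfolding fill_def Wm_def by auto
      qed
      then show ?thesis unfolding msg_space_def .
    qed
    have fill_eq: "fill (Wm x) j = fst x j" if "x \<in> space ?M" "j \<noteq> k" for x j
    proof -
      have fx: "fst x \<in> msg_space K L" using msg_x[OF that(1)] by simp
      show ?thesis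
      proof (cases "j \<in> {1..K}")
        case True
        have "fill (Wm x) j = Wm x j" unfolding fill_def using that(2) by (rule fun_upd_other)
        also have "Wm x j = fst x j" unfolding Wm_def using True that(2) by (simp only: restrict_apply' Diff_iff singleton_iff not_False_eq_True simp_thms)
        finally show ?thesis .
      next
        case False
        have fx': "fst x \<in> PiE {1..K} (\<lambda>_. PiE {..<L} (\<lambda>_. UNIV :: 'f set))" using fx unfolding msg_space_def .
        have "fst x j = undefined" by (rule PiE_arb[OF fx' False])
        moreover have "fill (Wm x) j = Wm x j" unfolding fill_def using that(2) by (rule fun_upd_other)
        moreover have "Wm x j = undefined" unfolding Wm_def using False by (auto simp: restrict_def)
        ultimately show ?thesis by simp
      qed
    qed
    have psi_fill: "\<psi> n (fst x) (snd x) = \<psi> n (fill (Wm x)) (snd x)"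
      if "x \<in> space ?M" "n \<in> {1..N}" "k \<notin> Z n" for x n
    proof -
      have "\<forall>k'\<in>Z n. fst x k' = fill (Wm x) k'"
      proof
        fix k' assume "k' \<in> Z n"
        then have "k' \<noteq> k" using that(3) by blast
        then show "fst x k' = fill (Wm x) k'" using fill_eq[OF that(1)] by simp
      qed
      then show ?thesis using psi_dep[rule_format, OF that(2) msg_x(1)[OF that(1)] fill_msg[OF that(1)]] by blast
    qed
    define V where "V = (\<lambda>x. (Wm x, snd x))"
    define Xi where "Xi = (\<lambda>x::(nat \<Rightarrow> nat \<Rightarrow> 'f) \<times> 'r. \<psi> ni (fst x) (snd x))"
    define hP where "hP = (\<lambda>(v, r). map (\<lambda>n. \<psi> n (fill v) r) (take i s))"
    define hG where "hG = (\<lambda>(xx, (v::nat \<Rightarrow> nat \<Rightarrow> 'f, r::'r)).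
       (v(k := (\<lambda>l\<in>{..<L}. g ((\<lambda>n\<in>B. \<psi> n (fill v) r)(ni := xx)) l - (\<Sum>j\<in>{1..K}-{k}. v j l))), r))"
    have P_eq: "Y i x = hP (V x)" if "x \<in> space ?M" for x
    proof -
    have "map (\<lambda>n. \<psi> n (fst x) (snd x)) (take i s) = map (\<lambda>n. \<psi> n (fill (Wm x)) (snd x)) (take i s)"
    proof (rule map_cong[OF refl])
      fix n assume "n \<in> set (take i s)"
      then obtain j where j: "j < length (take i s)" "n = take i s ! j" unfolding in_set_conv_nth by blast
      then have ji: "j < i" and nj: "n = s ! j" using i_lt by simp_all
      have "s ! j \<in> set s" using ji i_lt by (intro nth_mem) simp
      then have "n \<in> {1..N}" using s_sub nj by blast
      moreover have "k \<notin> Z n" using k_new ji nj by blast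
      ultimately have "n \<in> {1..N}" "k \<notin> Z n" by blast+
      then show "\<psi> n (fst x) (snd x) = \<psi> n (fill (Wm x)) (snd x)" by (rule psi_fill[OF that])
    qed
    then show ?thesis unfolding Y_def hP_def V_def by simp
    qed
    have G_eq: "(fst x, snd x) = hG (Xi x, V x)" if "x \<in> space ?M" for x
    proof -
      have w: "fst x \<in> msg_space K L" and r: "snd x \<in> set_pmf Q" using msg_x[OF that] by auto
      have A_eq: "(\<lambda>n\<in>B. \<psi> n (fill (Wm x)) (snd x))(ni := Xi x) = (\<lambda>n\<in>A. \<psi> n (fst x) (snd x))"
      proof
        fix n show "((\<lambda>n\<in>B. \<psi> n (fill (Wm x)) (snd x))(ni := Xi x)) n = (\<lambda>n\<in>A. \<psi> n (fst x) (snd x)) n"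
        proof (cases "n = ni")
          case True then show ?thesis unfolding A_def Xi_def by simp
        next
          case False
          show ?thesis
          proof (cases "n \<in> B")
            case True
            then have "n \<in> {1..N}" "k \<notin> Z n" unfolding B_def by auto
            then show ?thesis using False True psi_fill[OF that] unfolding A_def by simp
          next
            case nB: False then show ?thesis using False unfolding A_def by simp
          qed
        qed
      qed
      have sv: "g ((\<lambda>n\<in>B. \<psi> n (fill (Wm x)) (snd x))(ni := Xi x)) = msg_sum K L (fst x)"
        unfolding A_eq using g w r by blast
      have wk: "fst x j \<in> PiE {..<L} (\<lambda>_. UNIV)" if "j \<in> {1..K}" for j
        by (rule PiE_mem[OF w[unfolded msg_space_def] that])
      have wo: "fst x j = undefined" if "j \<notin> {1..K}" for j
        by (rule PiE_arb[OF w[unfolded msg_space_def] that])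
      have rec: "(Wm x)(k := (\<lambda>l\<in>{..<L}. msg_sum K L (fst x) l - (\<Sum>j\<in>{1..K}-{k}. Wm x j l))) = fst x"
      proof
        fix j
        show "((Wm x)(k := (\<lambda>l\<in>{..<L}. msg_sum K L (fst x) l - (\<Sum>j\<in>{1..K}-{k}. Wm x j l)))) j = fst x j"
        proof (cases "j = k")
          case True
          show ?thesis
          proof
            fix l
            show "((Wm x)(k := (\<lambda>l\<in>{..<L}. msg_sum K L (fst x) l - (\<Sum>j\<in>{1..K}-{k}. Wm x j l)))) j l = fst x j l"
            proof (cases "l < L")
              case True
              have "msg_sum K L (fst x) l = (\<Sum>j\<in>{1..K}. fst x j l)" using True by (simp add: msg_sum_def)
              also have "\<dots> = fst x k l + (\<Sum>j\<in>{1..K}-{k}. fst x j l)" using kK by (simp add: sum.remove)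
              also have "(\<Sum>j\<in>{1..K}-{k}. fst x j l) = (\<Sum>j\<in>{1..K}-{k}. Wm x j l)"
                unfolding Wm_def by (intro sum.cong refl) simp
              finally show ?thesis using True \<open>j = k\<close> by simp
            next
              case False
              then have "l \<notin> {..<L}" by simp
              then have "fst x k l = undefined" by (rule PiE_arb[OF wk[OF kK]])
              then show ?thesis using False \<open>j = k\<close> by simp
            qed
          qed
        next
          case False
          then show ?thesis using wo unfolding Wm_def by (cases "j \<in> {1..K}") auto
        qed
      qed
      show ?thesis unfolding hG_def V_def using sv rec by simp
    qed
    have s1: "Ent ?M ?q (\<lambda>x. (Xi x, Y i x)) \<ge> Ent ?M ?q (Y i) + Ent ?M ?q (\<lambda>x. (fst x, snd x)) - Ent ?M ?q V"
      by (rule step_gen[where hP=hP and hG=hG]) (use P_eq G_eq in auto)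
    have s2: "Ent ?M ?q V \<le> Ent ?M ?q Wm + Ent ?M ?q snd" unfolding V_def by (rule subadd)
    have s3: "Ent ?M ?q Wm \<le> real (L * (K - 1))"
    proof -
      have "Ent ?M ?q Wm \<le> log ?q (real (card (PiE ({1..K} - {k}) (\<lambda>_. PiE {..<L} (\<lambda>_. UNIV :: 'f set)))))"
      proof (rule ent_le_set)
        show "Wm ` space ?M \<subseteq> PiE ({1..K} - {k}) (\<lambda>_. PiE {..<L} (\<lambda>_. UNIV :: 'f set))"
        proof (rule image_subsetI)
          fix x assume x: "x \<in> space ?M"
          have "fst x \<in> msg_space K L" using msg_x[OF x] by simp
          then show "Wm x \<in> PiE ({1..K} - {k}) (\<lambda>_. PiE {..<L} (\<lambda>_. UNIV :: 'f set))"
            unfolding Wm_def msg_space_def by (auto simp: restrict_PiE_iff)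
        qed
      qed (intro finite_PiE, simp_all)
      also have "card (PiE ({1..K} - {k}) (\<lambda>_. PiE {..<L} (\<lambda>_. UNIV :: 'f set))) = CARD('f) ^ (L * (K - 1))"
        using kK by (simp add: card_PiE power_mult)
      also have "log ?q (real (CARD('f) ^ (L * (K - 1)))) = real (L * (K - 1))"
        unfolding of_nat_power using q1 by (intro log_pow_cancel) auto
      finally show ?thesis .
    qed
    have s4: "Ent ?M ?q (Y (Suc i)) = Ent ?M ?q (\<lambda>x. (Xi x, Y i x))"
      by (rule ent_eq[where f="\<lambda>(a, p). p @ [a]" and g="\<lambda>l. (last l, butlast l)"])
         (simp_all add: Y_def Xi_def take_Suc_conv_app_nth[OF i_lt] ni_def)
    have LK: "real (L * K) = real (L * (K - 1)) + real L"
    proof -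
      have "L * K = L * (K - 1) + L" using K_pos by (cases K) auto
      then show ?thesis by (metis of_nat_add)
    qed
    show ?thesis using s1 s2 s3 s4 H_pair H_fst LK by linarith
  qed
  have H_Y: "Ent ?M ?q (Y i) \<ge> real i * real L" if "i \<le> length s" for i
    using that
  proof (induction i)
    case 0 then show ?case using ent_nonneg by simp
  next
    case (Suc i) then show ?case using H_step[of i] by (simp add: algebra_simps)
  qed
  define Sf where "Sf = (\<lambda>(w :: nat \<Rightarrow> nat \<Rightarrow> 'f, r :: 'r). msg_sum K L w)"
  define Xall where "Xall = (\<lambda>(w, r). \<lambda>n\<in>{1..N}. \<psi> n w r)"
  have fin: "Ent ?M ?q (\<lambda>x. (fst x, snd x)) \<ge> Ent ?M ?q (fst) + Ent ?M ?q (Y (length s)) - Ent ?M ?q (Sf)"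
  proof (rule final_gen[where hY="\<lambda>x. map x s" and hS="msg_sum K L" and X=Xall
        and hG="\<lambda>(w, r). (w, Y (length s) (w, r), msg_sum K L w)"])
    show "Y (length s) x = map (Xall x) s" if "x \<in> space ?M" for x
      using s_sub unfolding Y_def Xall_def by (auto simp: split_beta subset_iff)
    show "Sf x = msg_sum K L (fst x)" for x unfolding Sf_def by (simp add: split_beta)
    show "(fst x, Y (length s) x, Sf x) = (\<lambda>(w, r). (w, Y (length s) (w, r), msg_sum K L w)) (fst x, snd x)" for x
      unfolding Sf_def by (simp add: split_beta)
    show "prob_space.conditional_mutual_information ?M ?q (count_space (fst ` space ?M)) (count_space (Xall ` space ?M)) (count_space (Sf ` space ?M)) fst Xall Sf = 0" using secure unfolding Xall_def Sf_def .
  qed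
  have HS: "Ent ?M ?q (Sf) \<le> real L"
  proof -
    have "Ent ?M ?q (Sf) \<le> log (real CARD('f)) (real (card (PiE {..<L} (\<lambda>_. UNIV :: 'f set))))"
      by (rule ent_le_set, rule image_subsetI, simp add: Sf_def split_beta msg_sum_PiE, rule finite_PiE, simp_all)
    also have "\<dots> = real L" using q1 by (simp add: card_PiE)
    finally show ?thesis .
  qed
  have X: "Ent ?M ?q (snd) \<ge> real (length s) * real L - real L"
    using fin H_pair HS H_Y[of "length s"] by simp
  then have "real (length s) * real L - real L \<le> prob_space.entropy ?M ?q (count_space (set_pmf Q)) snd"
    by (simp add: snd_space[OF Q_fin])
  then show ?thesis using L_pos by (simp add: snd_space[OF Q_fin] le_divide_eq algebra_simps)
qed

end
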